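(* Let $\mathrm{std}_{surj}:WHA\to WHA_{surj}$ be the $\mathbf Z$-linear map sending a basis substitution $\binom{[y_1^{r_1},\dots,y_k^{r_k}]}{\sigma}$ of $WHA$ to $\binom{[y_1,\dots,y_k]}{\sigma}$ (the top word with its repeated letters removed, the bottom word unchanged). Then $\mathrm{std}_{surj}$ is a Hopf algebra morphism which is the identity on $WHA_{surj}$, hence a Hopf algebra retraction of the inclusion $WHA_{surj}\subset WHA$; moreover it maps $WHA_{inj}$ onto $WHA_{inj}\cap WHA_{surj}=\varphi(MPR)$ and restricts to a Hopf algebra retraction of the inclusion $\varphi(MPR)\subset WHA_{inj}$.
   Context: Words are finite sequences of letters; $*$ denotes concatenation; the support $\mathrm{supp}(\alpha)$ of a word is the set of letters occurring in it. The shuffle product $\alpha\times_{sh}\beta$ of words $\alpha=[c_1,\dots,c_p]$, $\beta=[d_1,\dots,d_q]$ is the sum, with multiplicities, over all ways of choosing $p$ of the $p+q$ positions, of the word obtained by placing the $c$'s in their original order in the chosen positions and the $d$'s in their original order in the remaining ones. A subword of $[a_1,\dots,a_m]$ is a word $[a_{i_1},\dots,a_{i_r}]$ with $i_1<\dots<i_r$. Definition of $dWHA$: Let $\mathcal X$ be a countably infinite alphabet. A substitution is a pair $p=\binom{\rho}{\sigma}$ of words over $\mathcal X$ with $\mathrm{supp}(\rho)=\mathrm{supp}(\sigma)$, considered up to simultaneously renaming the letters of both words by a bijection of $\mathcal X$. $dWHA$ is the free abelian group with basis all substitutions (including the empty substitution $\binom{[\,]}{[\,]}$), graded by $\deg(p)=\#\mathrm{supp}(\rho)$.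 Multiplication: for substitutions $p=\binom{\rho}{\sigma}$, $p'=\binom{\rho'}{\sigma'}$ written with $\mathrm{supp}(\rho)\cap\mathrm{supp}(\rho')=\emptyset$, $m(p\otimes p')=\binom{\rho*\rho'}{\sigma\times_{sh}\sigma'}$, meaning the sum of $\binom{\rho*\rho'}{\gamma}$ over the terms $\gamma$ (with multiplicity) of $\sigma\times_{sh}\sigma'$. The unit is the empty substitution. A good cut of a word $\sigma$ is a factorization $\sigma=\sigma_1*\sigma_2$ with $\mathrm{supp}(\sigma_1)\cap\mathrm{supp}(\sigma_2)=\emptyset$ (the two trivial cuts included). Comultiplication: $\mu(p)=\sum \binom{p^{-1}(\sigma_1)}{\sigma_1}\otimes\binom{p^{-1}(\sigma_2)}{\sigma_2}$, summed over all good cuts $\sigma=\sigma_1*\sigma_2$, where $p^{-1}(\sigma_i)$ is the subword of $\rho$ consisting of all occurrences in $\rho$ of letters of $\mathrm{supp}(\sigma_i)$. Counit: $\varepsilon$ is $1$ on the empty substitution and $0$ on all other substitutions. This is a Hopf algebra. $WHA$ is the sub Hopf algebra of $dWHA$ spanned by the substitutions $\binom{\rho}{\sigma}$ with $\rho=[y_1^{r_1},\dots,y_k^{r_k}]$, $y_1,\dots,y_k$ distinct letters, $r_i\ge1$, where $y^r$ denotes $r$ consecutive copies of $y$. $WHA_{inj}$ (resp. $WHA_{surj}$) is the sub Hopf algebra spanned by those basis substitutions of $WHA$ whose bottom word $\sigma$ (resp. top word $\rho$) has no repeated letter. $\varphi(MPR)$ denotes the sub Hopf algebra of $dWHA$ spanned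 by the substitutions in which neither $\rho$ nor $\sigma$ has a repeated letter (it is the image of the Hopf algebra of permutations $MPR$ under $[t_1,\dots,t_n]\mapsto\binom{[x_1,\dots,x_n]}{[x_{t_1},\dots,x_{t_n}]}$). *)

theory Defs
  imports Main
begin

text \<open>Letters are natural numbers (a countably infinite alphabet).  Substitutions are considered up to simultaneous
  bijective renaming; we pick the canonical representative in which the letters of
  rho are renamed 0,1,2,... in the order of their first occurrence in rho.\<close>

type_synonym sub = "nat list \<times> nat list"

definition rename_idx :: "nat list \<Rightarrow> nat \<Rightarrow> nat" where
  "rename_idx rho x = length (takeWhile (\<lambda>y. y \<noteq> x) (remdups rho))"

definition canon :: "sub \<Rightarrow> sub" where
  "canon p = (map (rename_idx (fst p)) (fst p), map (rename_idx (fst p)) (snd p))"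

definition subst :: "sub set" where
  "subst = {p. set (fst p) = set (snd p) \<and> canon p = p}"

definition empty_sub :: sub where
  "empty_sub = ([], [])"

text \<open>Tensors (elements of dWHA tensor dWHA): finitely supported integer
  functions on pairs of basis substitutions.\<close>

type_synonym elt = "sub \<Rightarrow> int"
type_synonym tens = "sub \<times> sub \<Rightarrow> int"

definition supp :: "('a \<Rightarrow> int) \<Rightarrow> 'a set" where
  "supp a = {p. a p \<noteq> 0}"

definition dWHA :: "elt set" where
  "dWHA = {a. finite (supp a) \<and> supp a \<subseteq> subst}"

definition span :: "sub set \<Rightarrow> elt set" where
  "span B = {a \<in> dWHA. supp a \<subseteq> B}"

definition bas :: "sub \<Rightarrow> elt" where
  "bas p = (\<lambda>q. if q = p then 1 else 0)"

definition lin :: "(sub \<Rightarrow> elt) \<Rightarrow> elt \<Rightarrow> elt" where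
  "lin f a = (\<lambda>q. \<Sum>p\<in>supp a. a p * f p q)"

text \<open>Shuffle product of words, as a list of words with multiplicities.\<close>
fun shuf :: "'a list \<Rightarrow> 'a list \<Rightarrow> 'a list list" where
  "shuf [] ys = [ys]"
| "shuf xs [] = [xs]"
| "shuf (x # xs) (y # ys) = map ((#) x) (shuf xs (y # ys)) @ map ((#) y) (shuf (x # xs) ys)"

text \<open>Product of two basis substitutions: the letters of the second are shifted so
  that the supports of the top words are disjoint.\<close>
definition mult_basis :: "sub \<Rightarrow> sub \<Rightarrow> elt" where
  "mult_basis p p' = (let k = card (set (fst p));
                          rho2 = map (\<lambda>x. x + k) (fst p');
                          sig2 = map (\<lambda>x. x + k) (snd p')
                      in (\<lambda>q. int (length (filter (\<lambda>g. canon (fst p @ rho2, g) = q)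
                                                     (shuf (snd p) sig2)))))"

definition mult :: "elt \<Rightarrow> elt \<Rightarrow> elt" where
  "mult a b = (\<lambda>q. \<Sum>p\<in>supp a. \<Sum>p'\<in>supp b. a p * b p' * mult_basis p p' q)"

definition unit :: elt where
  "unit = bas empty_sub"

definition good_cut :: "nat list \<Rightarrow> nat \<Rightarrow> bool" where
  "good_cut sigma i \<longleftrightarrow> i \<le> length sigma \<and> set (take i sigma) \<inter> set (drop i sigma) = {}"

text \<open>The factor of p corresponding to a subword sigma_i of sigma: the subword of rho
  of all occurrences of letters of supp(sigma_i), over sigma_i (made canonical).\<close>
definition restr :: "sub \<Rightarrow> nat list \<Rightarrow> sub" where
  "restr p s = canon (filter (\<lambda>x. x \<in> set s) (fst p), s)"

definition comult_basis :: "sub \<Rightarrow> tens" where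
  "comult_basis p = (\<lambda>(q1, q2). int (card {i. good_cut (snd p) i
        \<and> restr p (take i (snd p)) = q1 \<and> restr p (drop i (snd p)) = q2}))"

definition comult :: "elt \<Rightarrow> tens" where
  "comult a = (\<lambda>qq. \<Sum>p\<in>supp a. a p * comult_basis p qq)"

definition counit :: "elt \<Rightarrow> int" where
  "counit a = a empty_sub"

definition tensor_map :: "(sub \<Rightarrow> elt) \<Rightarrow> (sub \<Rightarrow> elt) \<Rightarrow> tens \<Rightarrow> tens" where
  "tensor_map f g t = (\<lambda>(q1, q2). \<Sum>pp\<in>supp t. t pp * f (fst pp) q1 * g (snd pp) q2)"

definition mult_tens :: "tens \<Rightarrow> elt" where
  "mult_tens t = (\<lambda>q. \<Sum>pp\<in>supp t. t pp * mult_basis (fst pp) (snd pp) q)"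

text \<open>Both sides are linear, so it suffices to check on basis elements.\<close>
definition is_antipode :: "(sub \<Rightarrow> elt) \<Rightarrow> bool" where
  "is_antipode s \<longleftrightarrow> (\<forall>p\<in>subst. s p \<in> dWHA
      \<and> mult_tens (tensor_map s bas (comult (bas p))) = (\<lambda>q. counit (bas p) * unit q)
      \<and> mult_tens (tensor_map bas s (comult (bas p))) = (\<lambda>q. counit (bas p) * unit q))"

definition WHA_basis :: "sub set" where
  "WHA_basis = {p \<in> subst. \<exists>ys rs. distinct ys \<and> length rs = length ys \<and> (\<forall>r\<in>set rs. 1 \<le> r)
                   \<and> fst p = concat (map2 (\<lambda>y r. replicate r y) ys rs)}"

definition WHA :: "elt set" where
  "WHA = span WHA_basis"

definition WHA_inj :: "elt set" where
  "WHA_inj = span {p \<in> WHA_basis. distinct (snd p)}"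

definition WHA_surj :: "elt set" where
  "WHA_surj = span {p \<in> WHA_basis. distinct (fst p)}"

definition phi_MPR :: "elt set" where
  "phi_MPR = span {p \<in> subst. distinct (fst p) \<and> distinct (snd p)}"

text \<open>On a basis substitution of WHA, [y1^r1,...,yk^rk] over sigma is sent to
  [y1,...,yk] over sigma; removing adjacent duplicates does exactly this.\<close>
definition std_surj_basis :: "sub \<Rightarrow> sub" where
  "std_surj_basis p = canon (remdups_adj (fst p), snd p)"

definition std_surj :: "elt \<Rightarrow> elt" where
  "std_surj = lin (\<lambda>p. bas (std_surj_basis p))"

end

theory Submission
  imports Defs
begin


definition idx :: "nat list \<Rightarrow> nat \<Rightarrow> nat" where
  "idx L x = length (takeWhile (\<lambda>y. y \<noteq> x) L)"

lemma rename_idx_idx: "rename_idx rho x = idx (remdups rho) x"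
  by (simp add: rename_idx_def idx_def)

lemma idx_lt: "x \<in> set L \<Longrightarrow> idx L x < length L"
  by (induct L) (auto simp: idx_def)

lemma idx_nth: "x \<in> set L \<Longrightarrow> L ! idx L x = x"
  by (induct L) (auto simp: idx_def)

lemma idx_inj: "inj_on (idx L) (set L)"
  by (rule inj_onI) (metis idx_nth)

lemma idx_map: "inj_on f (insert x (set L)) \<Longrightarrow> idx (map f L) (f x) = idx L x"
  by (induct L) (auto simp: idx_def inj_on_def)

lemma remdups_map_inj: "inj_on f (set xs) \<Longrightarrow> remdups (map f xs) = map f (remdups xs)"
  by (induct xs) (auto simp: inj_on_def)

lemma rn_lt: "x \<in> set rho \<Longrightarrow> rename_idx rho x < card (set rho)"
  using idx_lt[of x "remdups rho"] by (simp add: rename_idx_idx length_remdups_card_conv)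

lemma rn_inj: "inj_on (rename_idx rho) (set rho)"
  using idx_inj[of "remdups rho"] by (simp add: rename_idx_idx[abs_def])

lemma rn_map: "inj_on f (set rho) \<Longrightarrow> x \<in> set rho \<Longrightarrow> rename_idx (map f rho) (f x) = rename_idx rho x"
  unfolding rename_idx_idx
  by (simp add: remdups_map_inj idx_map insert_absorb)

lemma canon_map:
  assumes "inj_on f (set rho)" "set sig \<subseteq> set rho"
  shows "canon (map f rho, map f sig) = canon (rho, sig)"
  using assms by (auto simp: canon_def rn_map subsetD)

lemma canon_idem:
  assumes "set (snd p) \<subseteq> set (fst p)"
  shows "canon (canon p) = canon p"
proof -
  obtain rho sig where p: "p = (rho, sig)" by (cases p)
  have "canon (canon p) = canon (map (rename_idx rho) rho, map (rename_idx rho) sig)"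
    by (simp add: p canon_def)
  also have "\<dots> = canon p" using assms rn_inj[of rho] by (simp add: p canon_map)
  finally show ?thesis .
qed

lemma canon_set: "set (snd p) \<subseteq> set (fst p) \<Longrightarrow> set (snd (canon p)) \<subseteq> set (fst (canon p))"
  "set (snd p) = set (fst p) \<Longrightarrow> set (snd (canon p)) = set (fst (canon p))"
  by (auto simp: canon_def)

lemma canon_subst: "set (snd p) = set (fst p) \<Longrightarrow> canon p \<in> subst"
  using canon_idem[of p] canon_set[of p] by (auto simp: subst_def)

lemma subst_bound: "p \<in> subst \<Longrightarrow> x \<in> set (fst p) \<Longrightarrow> x < card (set (fst p))"
proof -
  assume p: "p \<in> subst" and x: "x \<in> set (fst p)"
  have "canon p = p" using p by (simp add: subst_def)
  then have "fst p = map (rename_idx (fst p)) (fst p)"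
    by (metis canon_def fst_conv)
  then have "x \<in> rename_idx (fst p) ` set (fst p)" using x by (metis list.set_map)
  then show ?thesis using rn_lt by auto
qed



inductive blk :: "nat list \<Rightarrow> bool" where
  blk_Nil: "blk []"
| blk_Cons: "blk A \<Longrightarrow> y \<notin> set A \<Longrightarrow> 1 \<le> r \<Longrightarrow> blk (replicate r y @ A)"

lemma set_blocks: "length rs = length ys \<Longrightarrow> \<forall>r\<in>set rs. 1 \<le> r \<Longrightarrow>
   set (concat (map2 (\<lambda>y r. replicate r y) ys rs)) = set ys"
proof (induct ys arbitrary: rs)
  case Nil then show ?case by simp
next
  case (Cons y ys) then show ?case by (cases rs) auto
qed

lemma blocks_blk: "distinct ys \<Longrightarrow> length rs = length ys \<Longrightarrow> \<forall>r\<in>set rs. 1 \<le> r \<Longrightarrow>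
   blk (concat (map2 (\<lambda>y r. replicate r y) ys rs))"
proof (induct ys arbitrary: rs)
  case Nil then show ?case by (simp add: blk_Nil)
next
  case (Cons y ys)
  then obtain r rs' where rs: "rs = r # rs'" by (cases rs) auto
  have "blk (replicate r y @ concat (map2 (\<lambda>y r. replicate r y) ys rs'))"
    apply (rule blk_Cons)
    using Cons rs set_blocks[of rs' ys] by auto
  then show ?case by (simp add: rs)
qed

lemma blk_blocks: "blk A \<Longrightarrow> \<exists>ys rs. distinct ys \<and> length rs = length ys \<and> (\<forall>r\<in>set rs. 1 \<le> r)
    \<and> A = concat (map2 (\<lambda>y r. replicate r y) ys rs)"
proof (induct rule: blk.induct)
  case blk_Nil
  show ?case by (rule exI[of _ "[]"], rule exI[of _ "[]"]) simp
next
  case (blk_Cons A y r)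
  then obtain ys rs where h: "distinct ys" "length rs = length ys" "\<forall>r\<in>set rs. 1 \<le> r"
    "A = concat (map2 (\<lambda>y r. replicate r y) ys rs)" by blast
  have "set A = set ys" using set_blocks[of rs ys] h(2,3) unfolding h(4) by blast
  then have "distinct (y # ys) \<and> length (r # rs) = length (y # ys) \<and> (\<forall>r\<in>set (r # rs). 1 \<le> r)
    \<and> replicate r y @ A = concat (map2 (\<lambda>y r. replicate r y) (y # ys) (r # rs))"
    using h blk_Cons by simp
  then show ?case by blast
qed

lemma WHA_basis_blk: "WHA_basis = {p \<in> subst. blk (fst p)}"
proof (rule set_eqI)
  fix p
  show "p \<in> WHA_basis \<longleftrightarrow> p \<in> {p \<in> subst. blk (fst p)}"
  proof
    assume "p \<in> WHA_basis"
    then show "p \<in> {p \<in> subst. blk (fst p)}" unfolding WHA_basis_def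
      using blocks_blk by auto
  next
    assume a: "p \<in> {p \<in> subst. blk (fst p)}"
    then obtain ys rs where "distinct ys \<and> length rs = length ys \<and> (\<forall>r\<in>set rs. 1 \<le> r)
    \<and> fst p = concat (map2 (\<lambda>y r. replicate r y) ys rs)" using blk_blocks by blast
    then show "p \<in> WHA_basis" unfolding WHA_basis_def using a by blast
  qed
qed


lemma remdups_adj_rep: "1 \<le> r \<Longrightarrow> y \<notin> set Z \<Longrightarrow> remdups_adj (replicate r y @ Z) = y # remdups_adj Z"
proof (induct r)
  case 0 then show ?case by simp
next
  case (Suc r)
  show ?case
  proof (cases r)
    case 0 then show ?thesis using Suc by (cases Z) auto
  next
    case (Suc r') then show ?thesis using Suc.hyps Suc.prems by simp
  qed
qed

lemma blk_filter: "blk A \<Longrightarrow> blk (filter P A)"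
proof (induct rule: blk.induct)
  case blk_Nil then show ?case by (simp add: blk.blk_Nil)
next
  case (blk_Cons A y r)
  show ?case
  proof (cases "P y")
    case True
    have "blk (replicate r y @ filter P A)" using blk_Cons by (intro blk.blk_Cons) auto
    then show ?thesis using True by simp
  next
    case False
    then show ?thesis using blk_Cons by simp
  qed
qed

lemma blk_remdups_adj_filter: "blk A \<Longrightarrow> remdups_adj (filter P A) = filter P (remdups_adj A)"
proof (induct rule: blk.induct)
  case blk_Nil then show ?case by simp
next
  case (blk_Cons A y r)
  have "remdups_adj (replicate r y @ A) = y # remdups_adj A"
    using blk_Cons by (simp add: remdups_adj_rep)
  moreover have "filter P (replicate r y @ A) = (if P y then replicate r y @ filter P A else filter P A)"
    by simp
  ultimately show ?case using blk_Cons by (simp add: remdups_adj_rep)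
qed

lemma blk_remdups_adj_distinct: "blk A \<Longrightarrow> distinct (remdups_adj A)"
proof (induct rule: blk.induct)
  case blk_Nil then show ?case by simp
next
  case (blk_Cons A y r) then show ?case by (simp add: remdups_adj_rep)
qed

lemma blk_map: "blk A \<Longrightarrow> inj_on f (set A) \<Longrightarrow> blk (map f A)"
proof (induct rule: blk.induct)
  case blk_Nil then show ?case by (simp add: blk.blk_Nil)
next
  case (blk_Cons A y r)
  have "blk (replicate r (f y) @ map f A)"
    using blk_Cons by (intro blk.blk_Cons) (auto simp: inj_on_def)
  then show ?case by simp
qed

lemma distinct_blk: "distinct A \<Longrightarrow> blk A"
proof (induct A)
  case Nil then show ?case by (simp add: blk_Nil)
next
  case (Cons a A)
  then have "blk (replicate 1 a @ A)" by (intro blk.blk_Cons) auto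
  then show ?case by simp
qed

lemma blk_append: "blk A \<Longrightarrow> blk B \<Longrightarrow> set A \<inter> set B = {} \<Longrightarrow> blk (A @ B)"
proof (induct rule: blk.induct)
  case blk_Nil then show ?case by simp
next
  case (blk_Cons A y r)
  then have "blk (replicate r y @ (A @ B))" by (intro blk.blk_Cons) auto
  then show ?case by simp
qed


lemma remdups_adj_map_inj_on: "inj_on f (set xs) \<Longrightarrow> remdups_adj (map f xs) = map f (remdups_adj xs)"
  by (induct xs rule: remdups_adj.induct) (auto simp: inj_on_def)

lemma remdups_adj_append_disj: "set A \<inter> set B = {} \<Longrightarrow> remdups_adj (A @ B) = remdups_adj A @ remdups_adj B"
proof (induct A rule: remdups_adj.induct)
  case 1 then show ?case by simp
next
  case (2 x) then show ?case by (cases B) auto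
next
  case (3 x y xs) then show ?case by auto
qed

lemma shuf_map: "shuf (map f xs) (map f ys) = map (map f) (shuf xs ys)"
  by (induct xs ys rule: shuf.induct) auto

lemma shuf_set: "g \<in> set (shuf xs ys) \<Longrightarrow> set g = set xs \<union> set ys"
  by (induct xs ys arbitrary: g rule: shuf.induct) auto



abbreviation sb where "sb \<equiv> std_surj_basis"

lemma sb_canon:
  assumes "set (snd x) \<subseteq> set (fst x)"
  shows "sb (canon x) = canon (remdups_adj (fst x), snd x)"
proof -
  obtain A g where x: "x = (A, g)" by (cases x)
  define h where "h = rename_idx A"
  have inj: "inj_on h (set A)" unfolding h_def by (rule rn_inj)
  have "sb (canon x) = canon (remdups_adj (map h A), map h g)"
    by (simp add: std_surj_basis_def canon_def x h_def)
  also have "\<dots> = canon (map h (remdups_adj A), map h g)"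
    using inj by (simp add: remdups_adj_map_inj_on)
  also have "\<dots> = canon (remdups_adj A, g)"
    using inj assms by (intro canon_map) (auto simp: x)
  finally show ?thesis by (simp add: x)
qed

lemma sb_fst: "fst (sb p) = map (rename_idx (remdups_adj (fst p))) (remdups_adj (fst p))"
  and sb_snd: "snd (sb p) = map (rename_idx (remdups_adj (fst p))) (snd p)"
  by (simp_all add: std_surj_basis_def canon_def)

lemma sb_subst: "p \<in> subst \<Longrightarrow> sb p \<in> subst"
  unfolding std_surj_basis_def by (rule canon_subst) (simp add: subst_def)

lemma sb_distinct_fst: "blk (fst p) \<Longrightarrow> distinct (fst (sb p))"
  unfolding sb_fst using rn_inj[of "remdups_adj (fst p)"]
  by (simp add: distinct_map blk_remdups_adj_distinct)

lemma sb_WHA: "p \<in> subst \<Longrightarrow> blk (fst p) \<Longrightarrow> sb p \<in> WHA_basis \<and> distinct (fst (sb p))"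
  using sb_subst sb_distinct_fst distinct_blk by (simp add: WHA_basis_blk)

lemma sb_id: "p \<in> subst \<Longrightarrow> distinct (fst p) \<Longrightarrow> sb p = p"
  by (simp add: std_surj_basis_def remdups_adj_distinct subst_def)

lemma sb_distinct_snd: "p \<in> subst \<Longrightarrow> distinct (snd p) \<Longrightarrow> distinct (snd (sb p))"
  unfolding sb_snd using rn_inj[of "remdups_adj (fst p)"]
  by (simp add: distinct_map subst_def inj_on_subset)

lemma sb_empty_iff: "p \<in> subst \<Longrightarrow> sb p = empty_sub \<longleftrightarrow> p = empty_sub"
proof
  assume p: "p \<in> subst" and e: "sb p = empty_sub"
  then have "snd p = []" using sb_snd[of p] by (simp add: empty_sub_def)
  moreover then have "fst p = []" using p by (simp add: subst_def)
  ultimately show "p = empty_sub" by (simp add: empty_sub_def prod_eq_iff)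
next
  assume "p = empty_sub" then show "sb p = empty_sub"
    by (simp add: empty_sub_def std_surj_basis_def canon_def)
qed

lemma sb_card: "card (set (fst (sb p))) = card (set (fst p))"
  unfolding sb_fst using rn_inj[of "remdups_adj (fst p)"]
  by (simp add: card_image)

lemma count_lemma:
  assumes "finite S" "F ` set L \<subseteq> S"
  shows "(\<Sum>q\<in>S. int (length (filter (\<lambda>g. F g = q) L)) * h q) = (\<Sum>g\<leftarrow>L. h (F g))"
  using assms(2)
proof (induct L)
  case Nil then show ?case by simp
next
  case (Cons x L)
  have "(\<Sum>q\<in>S. int (length (filter (\<lambda>g. F g = q) (x # L))) * h q)
      = (\<Sum>q\<in>S. (if F x = q then h q else 0) + int (length (filter (\<lambda>g. F g = q) L)) * h q)"
    by (intro sum.cong) (auto simp: algebra_simps)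
  also have "\<dots> = h (F x) + (\<Sum>q\<in>S. int (length (filter (\<lambda>g. F g = q) L)) * h q)"
    using Cons.prems assms(1) by (simp add: sum.distrib)
  finally show ?case using Cons by simp
qed

lemma sum_list_ind: "(\<Sum>g\<leftarrow>L. (if P g then 1 else 0)::int) = int (length (filter P L))"
  by (induct L) auto



lemma supp_sub_neutral:
  assumes "finite S" "supp a \<subseteq> S"
  shows "(\<Sum>p\<in>supp a. a p * F p) = (\<Sum>p\<in>S. a p * F p)"
  using assms by (intro sum.mono_neutral_left) (auto simp: supp_def)

lemma mb_supp:
  "supp (mult_basis p p') \<subseteq> (\<lambda>g. canon (fst p @ map (\<lambda>x. x + card (set (fst p))) (fst p'), g))
      ` set (shuf (snd p) (map (\<lambda>x. x + card (set (fst p))) (snd p')))"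
proof
  fix q assume "q \<in> supp (mult_basis p p')"
  then obtain g where "g \<in> set (shuf (snd p) (map (\<lambda>x. x + card (set (fst p))) (snd p')))"
     "canon (fst p @ map (\<lambda>x. x + card (set (fst p))) (fst p'), g) = q"
  proof -
    have "length (filter (\<lambda>g. canon (fst p @ map (\<lambda>x. x + card (set (fst p))) (fst p'), g) = q)
        (shuf (snd p) (map (\<lambda>x. x + card (set (fst p))) (snd p')))) \<noteq> 0"
      using \<open>q \<in> supp (mult_basis p p')\<close> by (simp add: supp_def mult_basis_def Let_def)
    then show ?thesis using that by (auto simp: filter_empty_conv)
  qed
  then show "q \<in> (\<lambda>g. canon (fst p @ map (\<lambda>x. x + card (set (fst p))) (fst p'), g))
      ` set (shuf (snd p) (map (\<lambda>x. x + card (set (fst p))) (snd p')))" by blast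
qed

lemma mb_finite: "finite (supp (mult_basis p p'))"
  by (rule finite_subset[OF mb_supp]) simp

lemma std_mb:
  assumes p: "p \<in> subst" and p': "p' \<in> subst"
  shows "(\<Sum>q\<in>supp (mult_basis p p'). mult_basis p p' q * bas (sb q) r) = mult_basis (sb p) (sb p') r"
proof -
  obtain rho sig where pp: "p = (rho, sig)" by (cases p)
  obtain rho' sig' where pp': "p' = (rho', sig')" by (cases p')
  define k where "k = card (set rho)"
  define L where "L = shuf sig (map (\<lambda>x. x + k) sig')"
  define F where "F = (\<lambda>g. canon (rho @ map (\<lambda>x. x + k) rho', g))"
  define R where "R = remdups_adj rho"
  define R' where "R' = remdups_adj rho'"
  define f where "f = rename_idx R"
  define f' where "f' = rename_idx R'"
  define H where "H = (\<lambda>x. if x < k then f x else f' (x - k) + k)"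
  have sr: "set sig = set rho" "set sig' = set rho'" using p p' by (auto simp: pp pp' subst_def)
  have bound: "x \<in> set rho \<Longrightarrow> x < k" for x using subst_bound[OF p] by (simp add: pp k_def)
  have setR: "set R = set rho" "set R' = set rho'" by (simp_all add: R_def R'_def)
  have gset: "g \<in> set L \<Longrightarrow> set g = set R \<union> (\<lambda>x. x + k) ` set R'" for g
    using shuf_set[of g sig "map (\<lambda>x. x + k) sig'"] sr setR by (simp add: L_def)
  have disj: "set rho \<inter> set (map (\<lambda>x. x + k) rho') = {}" using bound by auto
  have lhs: "(\<Sum>q\<in>supp (mult_basis p p'). mult_basis p p' q * bas (sb q) r)
      = int (length (filter (\<lambda>g. sb (F g) = r) L))"
  proof -
    have "(\<Sum>q\<in>supp (mult_basis p p'). mult_basis p p' q * bas (sb q) r)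
       = (\<Sum>q\<in>F ` set L. mult_basis p p' q * bas (sb q) r)"
      using mb_supp[of p p'] by (intro supp_sub_neutral) (auto simp: pp pp' k_def L_def F_def)
    also have "\<dots> = (\<Sum>q\<in>F ` set L. int (length (filter (\<lambda>g. F g = q) L)) * bas (sb q) r)"
      by (simp add: mult_basis_def pp pp' Let_def k_def L_def F_def)
    also have "\<dots> = (\<Sum>g\<leftarrow>L. bas (sb (F g)) r)"
      by (rule count_lemma) auto
    also have "\<dots> = int (length (filter (\<lambda>g. sb (F g) = r) L))"
      by (simp add: bas_def sum_list_ind[symmetric] eq_commute)
    finally show ?thesis .
  qed
  have sbF: "g \<in> set L \<Longrightarrow> sb (F g) = canon (R @ map (\<lambda>x. x + k) R', g)" for g
  proof -
    assume g: "g \<in> set L"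
    have "sb (F g) = canon (remdups_adj (rho @ map (\<lambda>x. x + k) rho'), g)"
      unfolding F_def using gset[OF g] setR by (subst sb_canon) auto
    also have "remdups_adj (rho @ map (\<lambda>x. x + k) rho') = R @ map (\<lambda>x. x + k) R'"
      using disj by (simp add: remdups_adj_append_disj remdups_adj_map_inj_on R_def R'_def)
    finally show ?thesis .
  qed
  have fR: "x \<in> set R \<Longrightarrow> f x < k" for x
    using rn_lt[of x R] setR by (simp add: f_def k_def)
  have HR: "map H R = map f R" using bound setR by (auto simp: H_def)
  have HR': "map H (map (\<lambda>x. x + k) R') = map (\<lambda>x. f' x + k) R'" by (auto simp: H_def)
  have Hs: "map H sig = map f sig" using bound sr by (auto simp: H_def)
  have Hs': "map H (map (\<lambda>x. x + k) sig') = map (\<lambda>x. f' x + k) sig'" by (auto simp: H_def)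
  have injH: "inj_on H (set (R @ map (\<lambda>x. x + k) R'))"
  proof (rule inj_onI)
    fix x y assume x: "x \<in> set (R @ map (\<lambda>x. x + k) R')" and y: "y \<in> set (R @ map (\<lambda>x. x + k) R')"
      and e: "H x = H y"
    have inR: "inj_on f (set R)" "inj_on f' (set R')" unfolding f_def f'_def by (rule rn_inj)+
    show "x = y"
    proof (cases "x \<in> set R")
      case True
      note xR = True
      show ?thesis
      proof (cases "y \<in> set R")
        case True then show ?thesis using xR e bound setR inR(1) by (auto simp: H_def inj_on_def)
      next
        case False
        then obtain y' where "y = y' + k" "y' \<in> set R'" using y by auto
        moreover have "f x < k" "x < k" using fR xR bound setR by auto
        ultimately show ?thesis using e by (auto simp: H_def)
      qed
    next
      case False
      then obtain x' where x': "x = x' + k" "x' \<in> set R'" using x by auto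
      show ?thesis
      proof (cases "y \<in> set R")
        case True
        moreover have "f y < k" "y < k" using fR True bound setR by auto
        ultimately show ?thesis using e x' by (auto simp: H_def)
      next
        case False
        then obtain y' where "y = y' + k" "y' \<in> set R'" using y by auto
        then show ?thesis using x' e inR(2) by (auto simp: H_def inj_on_def)
      qed
    qed
  qed
  have ksb: "card (set (fst (sb p))) = k" using sb_card[of p] by (simp add: pp k_def)
  have rhs: "mult_basis (sb p) (sb p') r
      = int (length (filter (\<lambda>g. canon (map H (R @ map (\<lambda>x. x + k) R'), map H g) = r) L))"
  proof -
    have fs: "fst (sb p) = map f R" "snd (sb p) = map f sig" "fst (sb p') = map f' R'" "snd (sb p') = map f' sig'"
      by (simp_all add: sb_fst sb_snd pp pp' f_def f'_def R_def R'_def)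
    have "shuf (snd (sb p)) (map (\<lambda>x. x + k) (snd (sb p'))) = map (map H) L"
      unfolding L_def shuf_map[symmetric] fs Hs Hs' by (simp add: comp_def)
    moreover have "fst (sb p) @ map (\<lambda>x. x + k) (fst (sb p')) = map H (R @ map (\<lambda>x. x + k) R')"
      using fs HR HR' by (simp add: comp_def)
    ultimately show ?thesis
      by (simp add: mult_basis_def Let_def ksb filter_map comp_def)
  qed
  show ?thesis unfolding lhs rhs
  proof (rule arg_cong[where f = "\<lambda>x. int (length x)"], rule filter_cong[OF refl])
    fix g assume g: "g \<in> set L"
    have "canon (map H (R @ map (\<lambda>x. x + k) R'), map H g) = canon (R @ map (\<lambda>x. x + k) R', g)"
      using injH gset[OF g] by (intro canon_map) auto
    then show "(sb (F g) = r) = (canon (map H (R @ map (\<lambda>x. x + k) R'), map H g) = r)"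
      using sbF[OF g] by simp
  qed
qed



lemma sum_supp_lin:
  assumes I: "finite I" and fin: "\<And>i. i \<in> I \<Longrightarrow> finite (supp (g i))"
  shows "(\<Sum>u\<in>supp (\<lambda>u. \<Sum>i\<in>I. c i * g i u). (\<Sum>i\<in>I. c i * g i u) * H u)
       = (\<Sum>i\<in>I. c i * (\<Sum>u\<in>supp (g i). g i u * H u))"
proof -
  define U where "U = (\<Union>i\<in>I. supp (g i))"
  have U: "finite U" using I fin by (simp add: U_def)
  have sub: "supp (\<lambda>u. \<Sum>i\<in>I. c i * g i u) \<subseteq> U"
  proof
    fix u assume "u \<in> supp (\<lambda>u. \<Sum>i\<in>I. c i * g i u)"
    then have "(\<Sum>i\<in>I. c i * g i u) \<noteq> 0" by (simp add: supp_def)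
    then obtain i where "i \<in> I" "c i * g i u \<noteq> 0" by (meson sum.neutral)
    then show "u \<in> U" by (auto simp: U_def supp_def)
  qed
  have "(\<Sum>u\<in>supp (\<lambda>u. \<Sum>i\<in>I. c i * g i u). (\<Sum>i\<in>I. c i * g i u) * H u)
      = (\<Sum>u\<in>U. (\<Sum>i\<in>I. c i * g i u) * H u)"
    using supp_sub_neutral[OF U sub, of H] by simp
  also have "\<dots> = (\<Sum>i\<in>I. c i * (\<Sum>u\<in>U. g i u * H u))"
    by (simp add: sum_distrib_right sum_distrib_left mult.assoc sum.swap[of _ U])
  also have "\<dots> = (\<Sum>i\<in>I. c i * (\<Sum>u\<in>supp (g i). g i u * H u))"
  proof (rule sum.cong[OF refl])
    fix i assume i: "i \<in> I"
    have "supp (g i) \<subseteq> U" using i by (auto simp: U_def)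
    then show "c i * (\<Sum>u\<in>U. g i u * H u) = c i * (\<Sum>u\<in>supp (g i). g i u * H u)"
      using supp_sub_neutral[OF U, of "g i" H] by simp
  qed
  finally show ?thesis .
qed

lemma supp_bas[simp]: "supp (bas x) = {x}"
  by (auto simp: supp_def bas_def)

lemma bas_self[simp]: "bas x x = 1"
  by (simp add: bas_def)

lemma sum_bas[simp]: "(\<Sum>u\<in>supp (bas x). bas x u * H u) = H x"
  by (simp only: supp_bas) simp

lemma std_eq: "std_surj a = (\<lambda>u. \<Sum>p\<in>supp a. a p * bas (sb p) u)"
  by (simp add: std_surj_def lin_def)

lemma std_sum:
  assumes "finite (supp a)"
  shows "(\<Sum>u\<in>supp (std_surj a). std_surj a u * H u) = (\<Sum>p\<in>supp a. a p * H (sb p))"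
  unfolding std_eq using sum_supp_lin[OF assms, of "\<lambda>p. bas (sb p)" a H] by simp

lemma std_supp: "supp (std_surj a) \<subseteq> sb ` supp a"
proof
  fix u assume "u \<in> supp (std_surj a)"
  then have "(\<Sum>p\<in>supp a. a p * bas (sb p) u) \<noteq> 0" by (simp add: supp_def std_eq)
  then obtain p where "p \<in> supp a" "a p * bas (sb p) u \<noteq> 0" by (meson sum.neutral)
  then show "u \<in> sb ` supp a" by (auto simp: bas_def split: if_splits)
qed

lemma std_dWHA: "a \<in> dWHA \<Longrightarrow> std_surj a \<in> dWHA"
proof -
  assume a: "a \<in> dWHA"
  then have "sb ` supp a \<subseteq> subst" using sb_subst by (auto simp: dWHA_def)
  moreover have "finite (sb ` supp a)" using a by (simp add: dWHA_def)
  ultimately show ?thesis using std_supp[of a] unfolding dWHA_def by (blast intro: finite_subset)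
qed

lemma mult_eq: "mult a b = (\<lambda>q. \<Sum>pp\<in>supp a \<times> supp b. (a (fst pp) * b (snd pp)) * mult_basis (fst pp) (snd pp) q)"
  by (simp add: mult_def sum.cartesian_product case_prod_unfold)

lemma mult_finite: "finite (supp a) \<Longrightarrow> finite (supp b) \<Longrightarrow> finite (supp (mult a b))"
proof -
  assume fa: "finite (supp a)" and fb: "finite (supp b)"
  have "supp (mult a b) \<subseteq> (\<Union>pp\<in>supp a \<times> supp b. supp (mult_basis (fst pp) (snd pp)))"
  proof
    fix u assume "u \<in> supp (mult a b)"
    then have "(\<Sum>pp\<in>supp a \<times> supp b. (a (fst pp) * b (snd pp)) * mult_basis (fst pp) (snd pp) u) \<noteq> 0"
      by (simp add: supp_def mult_eq)
    then obtain pp where "pp \<in> supp a \<times> supp b" "(a (fst pp) * b (snd pp)) * mult_basis (fst pp) (snd pp) u \<noteq> 0"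
      by (meson sum.neutral)
    then show "u \<in> (\<Union>pp\<in>supp a \<times> supp b. supp (mult_basis (fst pp) (snd pp)))"
      by (intro UN_I[of pp]) (simp_all add: supp_def)
  qed
  moreover have "finite (\<Union>pp\<in>supp a \<times> supp b. supp (mult_basis (fst pp) (snd pp)))"
    by (intro finite_UN_I) (simp_all add: fa fb mb_finite)
  ultimately show ?thesis by (rule finite_subset)
qed

lemma std_mult:
  assumes a: "a \<in> dWHA" and b: "b \<in> dWHA"
  shows "std_surj (mult a b) = mult (std_surj a) (std_surj b)"
proof
  fix r
  have fa: "finite (supp a)" and fb: "finite (supp b)" using a b by (auto simp: dWHA_def)
  have sa: "supp a \<subseteq> subst" and sb': "supp b \<subseteq> subst" using a b by (auto simp: dWHA_def)
  have "std_surj (mult a b) r = (\<Sum>u\<in>supp (mult a b). mult a b u * bas (sb u) r)"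
    by (simp add: std_eq)
  also have "\<dots> = (\<Sum>pp\<in>supp a \<times> supp b. (a (fst pp) * b (snd pp)) *
        (\<Sum>u\<in>supp (mult_basis (fst pp) (snd pp)). mult_basis (fst pp) (snd pp) u * bas (sb u) r))"
    unfolding mult_eq[of a b]
    by (rule sum_supp_lin) (use fa fb mb_finite in auto)
  also have "\<dots> = (\<Sum>pp\<in>supp a \<times> supp b. (a (fst pp) * b (snd pp)) * mult_basis (sb (fst pp)) (sb (snd pp)) r)"
  proof (rule sum.cong[OF refl])
    fix pp assume "pp \<in> supp a \<times> supp b"
    then have "fst pp \<in> subst" "snd pp \<in> subst" using sa sb' by auto
    then show "(a (fst pp) * b (snd pp)) *
        (\<Sum>u\<in>supp (mult_basis (fst pp) (snd pp)). mult_basis (fst pp) (snd pp) u * bas (sb u) r)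
      = (a (fst pp) * b (snd pp)) * mult_basis (sb (fst pp)) (sb (snd pp)) r"
      by (simp add: std_mb)
  qed
  also have "\<dots> = (\<Sum>p\<in>supp a. a p * (\<Sum>p'\<in>supp b. b p' * mult_basis (sb p) (sb p') r))"
    by (simp add: sum_distrib_left mult.assoc sum.cartesian_product case_prod_unfold)
  also have "\<dots> = (\<Sum>p\<in>supp a. a p * (\<Sum>u'\<in>supp (std_surj b). std_surj b u' * mult_basis (sb p) u' r))"
    using std_sum[OF fb] by simp
  also have "\<dots> = (\<Sum>u\<in>supp (std_surj a). std_surj a u * (\<Sum>u'\<in>supp (std_surj b). std_surj b u' * mult_basis u u' r))"
    using std_sum[OF fa] by simp
  also have "\<dots> = mult (std_surj a) (std_surj b) r"
    by (simp add: mult_def sum_distrib_left mult.assoc)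
  finally show "std_surj (mult a b) r = mult (std_surj a) (std_surj b) r" .
qed



definition cI :: "sub \<Rightarrow> nat set" where "cI p = {i. good_cut (snd p) i}"
definition Phi :: "sub \<Rightarrow> nat \<Rightarrow> sub \<times> sub" where
  "Phi p i = (restr p (take i (snd p)), restr p (drop i (snd p)))"

lemma cI_finite: "finite (cI p)"
  by (rule finite_subset[of _ "{..length (snd p)}"]) (auto simp: cI_def good_cut_def)

lemma cb_eq: "comult_basis p qq = int (card {i \<in> cI p. Phi p i = qq})"
  by (cases qq) (simp add: comult_basis_def cI_def Phi_def)

lemma cb_supp: "supp (comult_basis p) \<subseteq> Phi p ` cI p"
proof
  fix qq assume "qq \<in> supp (comult_basis p)"
  then have "{i \<in> cI p. Phi p i = qq} \<noteq> {}"
  proof (intro notI)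
    assume "qq \<in> supp (comult_basis p)" "{i \<in> cI p. Phi p i = qq} = {}"
    then show False by (simp add: supp_def cb_eq)
  qed
  then show "qq \<in> Phi p ` cI p" by blast
qed

lemma cb_finite: "finite (supp (comult_basis p))"
  by (rule finite_subset[OF cb_supp]) (simp add: cI_finite)

lemma cb_sum: "(\<Sum>qq\<in>supp (comult_basis p). comult_basis p qq * h qq) = (\<Sum>i\<in>cI p. h (Phi p i))"
proof -
  have "(\<Sum>qq\<in>supp (comult_basis p). comult_basis p qq * h qq)
      = (\<Sum>qq\<in>Phi p ` cI p. comult_basis p qq * h qq)"
    using cI_finite cb_supp by (intro supp_sub_neutral) auto
  also have "\<dots> = (\<Sum>qq\<in>Phi p ` cI p. (\<Sum>i\<in>{i \<in> cI p. Phi p i = qq}. h (Phi p i)))"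
  proof (rule sum.cong[OF refl])
    fix qq assume "qq \<in> Phi p ` cI p"
    have "(\<Sum>i\<in>{i \<in> cI p. Phi p i = qq}. h (Phi p i)) = (\<Sum>i\<in>{i \<in> cI p. Phi p i = qq}. h qq)"
      by (rule sum.cong) auto
    then show "comult_basis p qq * h qq = (\<Sum>i\<in>{i \<in> cI p. Phi p i = qq}. h (Phi p i))"
      by (simp add: cb_eq)
  qed
  also have "\<dots> = (\<Sum>i\<in>cI p. h (Phi p i))"
    using sum.image_gen[OF cI_finite, where h = "\<lambda>i. h (Phi p i)" and g = "Phi p"] by simp
  finally show ?thesis .
qed

lemma good_cut_map: "inj_on f (set s) \<Longrightarrow> good_cut (map f s) i \<longleftrightarrow> good_cut s i"
proof -
  assume inj: "inj_on f (set s)"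
  have eq: "f ` set (take i s) \<inter> f ` set (drop i s) = f ` (set (take i s) \<inter> set (drop i s))"
    using inj by (intro inj_on_image_Int[symmetric]) (auto dest: in_set_takeD in_set_dropD)
  show ?thesis
    by (simp only: good_cut_def length_map take_map drop_map set_map eq image_is_empty)
qed

lemma restr_sb:
  assumes p: "p \<in> subst" and b: "blk (fst p)" and s: "set s \<subseteq> set (snd p)"
  shows "restr (sb p) (map (rename_idx (remdups_adj (fst p))) s) = sb (restr p s)"
proof -
  define R where "R = remdups_adj (fst p)"
  define f where "f = rename_idx R"
  have inj: "inj_on f (set R)" unfolding f_def by (rule rn_inj)
  have sR: "set s \<subseteq> set R" using s p by (simp add: R_def subst_def)
  have "filter (\<lambda>x. x \<in> set (map f s)) (map f R) = map f (filter (\<lambda>x. x \<in> set s) R)"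
  proof -
    have "filter (\<lambda>x. x \<in> set (map f s)) (map f R) = map f (filter (\<lambda>x. f x \<in> f ` set s) R)"
      by (simp add: filter_map comp_def)
    also have "filter (\<lambda>x. f x \<in> f ` set s) R = filter (\<lambda>x. x \<in> set s) R"
    proof (rule filter_cong[OF refl])
      fix x assume "x \<in> set R"
      then show "(f x \<in> f ` set s) = (x \<in> set s)" using inj sR by (auto simp: inj_on_def)
    qed
    finally show ?thesis .
  qed
  then have "restr (sb p) (map f s) = canon (map f (filter (\<lambda>x. x \<in> set s) R), map f s)"
    by (simp add: restr_def sb_fst R_def f_def)
  also have "\<dots> = canon (filter (\<lambda>x. x \<in> set s) R, s)"
    using inj sR by (intro canon_map) (auto intro: inj_on_subset)
  also have "\<dots> = sb (restr p s)"
  proof -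
    have "sb (restr p s) = canon (remdups_adj (filter (\<lambda>x. x \<in> set s) (fst p)), s)"
      unfolding restr_def using sR by (subst sb_canon) (auto simp: R_def)
    then show ?thesis using b by (simp add: blk_remdups_adj_filter R_def)
  qed
  finally show ?thesis by (simp add: f_def R_def)
qed

lemma cI_sb: "p \<in> subst \<Longrightarrow> cI (sb p) = cI p"
  unfolding cI_def sb_snd
proof (rule Collect_cong)
  fix i assume p: "p \<in> subst"
  have "inj_on (rename_idx (remdups_adj (fst p))) (set (snd p))"
    using rn_inj[of "remdups_adj (fst p)"] p by (auto simp: subst_def)
  then show "good_cut (map (rename_idx (remdups_adj (fst p))) (snd p)) i = good_cut (snd p) i"
    by (rule good_cut_map)
qed

lemma Phi_sb: "p \<in> subst \<Longrightarrow> blk (fst p) \<Longrightarrow> Phi (sb p) i = (sb (fst (Phi p i)), sb (snd (Phi p i)))"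
  unfolding Phi_def sb_snd take_map[symmetric] drop_map[symmetric]
  by (simp add: restr_sb[symmetric] take_map drop_map set_take_subset set_drop_subset)

lemma cb_sb:
  assumes p: "p \<in> subst" and b: "blk (fst p)"
  shows "(\<Sum>pp\<in>supp (comult_basis p). comult_basis p pp * (bas (sb (fst pp)) q1 * bas (sb (snd pp)) q2))
     = comult_basis (sb p) (q1, q2)"
proof -
  have "(\<Sum>pp\<in>supp (comult_basis p). comult_basis p pp * (bas (sb (fst pp)) q1 * bas (sb (snd pp)) q2))
     = (\<Sum>i\<in>cI p. bas (sb (fst (Phi p i))) q1 * bas (sb (snd (Phi p i))) q2)"
    by (rule cb_sum)
  also have "\<dots> = (\<Sum>i\<in>cI p. if Phi (sb p) i = (q1, q2) then 1 else 0)"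
    using Phi_sb[OF p b] by (intro sum.cong refl) (auto simp: bas_def)
  also have "\<dots> = int (card {i \<in> cI p. Phi (sb p) i = (q1, q2)})"
    using cI_finite by (simp add: sum.If_cases Int_def)
  also have "\<dots> = comult_basis (sb p) (q1, q2)"
    by (simp add: cb_eq cI_sb[OF p])
  finally show ?thesis .
qed

lemma comult_eq: "comult a = (\<lambda>qq. \<Sum>p\<in>supp a. a p * comult_basis p qq)"
  by (simp add: comult_def)

lemma tensor_map_eq: "tensor_map f g t qq = (\<Sum>pp\<in>supp t. t pp * (f (fst pp) (fst qq) * g (snd pp) (snd qq)))"
  by (cases qq) (simp add: tensor_map_def mult.assoc)

lemma std_comult:
  assumes a: "a \<in> WHA"
  shows "comult (std_surj a) = tensor_map (\<lambda>p. bas (sb p)) (\<lambda>p. bas (sb p)) (comult a)"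
proof
  fix qq :: "sub \<times> sub"
  obtain q1 q2 where qq: "qq = (q1, q2)" by (cases qq)
  have fa: "finite (supp a)" and sa: "\<And>p. p \<in> supp a \<Longrightarrow> p \<in> subst \<and> blk (fst p)"
    using a by (auto simp: WHA_def span_def dWHA_def WHA_basis_blk)
  have "comult (std_surj a) qq = (\<Sum>p\<in>supp a. a p * comult_basis (sb p) qq)"
    by (simp add: comult_def std_sum[OF fa])
  also have "\<dots> = (\<Sum>p\<in>supp a. a p * (\<Sum>pp\<in>supp (comult_basis p). comult_basis p pp *
       (bas (sb (fst pp)) q1 * bas (sb (snd pp)) q2)))"
    using sa by (intro sum.cong refl) (simp add: cb_sb qq)
  also have "\<dots> = tensor_map (\<lambda>p. bas (sb p)) (\<lambda>p. bas (sb p)) (comult a) qq"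
    unfolding tensor_map_eq comult_eq qq fst_conv snd_conv
    by (rule sum_supp_lin[symmetric]) (simp_all add: fa cb_finite)
  finally show "comult (std_surj a) qq = tensor_map (\<lambda>p. bas (sb p)) (\<lambda>p. bas (sb p)) (comult a) qq" .
qed

lemma std_counit:
  assumes a: "a \<in> dWHA"
  shows "counit (std_surj a) = counit a"
proof -
  have fa: "finite (supp a)" and sa: "supp a \<subseteq> subst" using a by (auto simp: dWHA_def)
  have "counit (std_surj a) = (\<Sum>p\<in>supp a. a p * bas (sb p) empty_sub)"
    by (simp add: counit_def std_eq)
  also have "\<dots> = (\<Sum>p\<in>supp a. if p = empty_sub then a p else 0)"
  proof (rule sum.cong[OF refl])
    fix p assume "p \<in> supp a"
    then have "p \<in> subst" using sa by blast
    then have "sb p = empty_sub \<longleftrightarrow> p = empty_sub" by (rule sb_empty_iff)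
    then show "a p * bas (sb p) empty_sub = (if p = empty_sub then a p else 0)"
      by (auto simp: bas_def)
  qed
  also have "\<dots> = counit a"
    using fa by (auto simp: counit_def supp_def)
  finally show ?thesis .
qed



lemma restr_subst: "p \<in> subst \<Longrightarrow> set t \<subseteq> set (snd p) \<Longrightarrow> restr p t \<in> subst"
  unfolding restr_def by (rule canon_subst) (auto simp: subst_def)

lemma restr_blk: "blk (fst p) \<Longrightarrow> blk (fst (restr p t))"
  unfolding restr_def canon_def fst_conv
  apply (rule blk_map)
   apply (erule blk_filter)
  apply (rule rn_inj)
  done

lemma restr_len: "length (snd (restr p t)) = length t"
  by (simp add: restr_def canon_def)

lemma Phi_subst: "p \<in> subst \<Longrightarrow> fst (Phi p i) \<in> subst \<and> snd (Phi p i) \<in> subst"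
  unfolding Phi_def by (auto intro!: restr_subst dest: in_set_takeD in_set_dropD)

lemma comult_bas: "comult (bas p) = comult_basis p"
  by (simp add: comult_def)

lemma inner_G:
  assumes "finite (supp x)"
  shows "(\<Sum>qq\<in>supp (\<lambda>qq. x (fst qq) * bas y (snd qq)). (x (fst qq) * bas y (snd qq)) * mult_basis (fst qq) (snd qq) q)
    = mult x (bas y) q"
proof -
  have "supp (\<lambda>qq. x (fst qq) * bas y (snd qq)) = supp x \<times> {y}"
    by (auto simp: supp_def bas_def split: if_splits)
  then have "(\<Sum>qq\<in>supp (\<lambda>qq. x (fst qq) * bas y (snd qq)). (x (fst qq) * bas y (snd qq)) * mult_basis (fst qq) (snd qq) q)
     = (\<Sum>qq\<in>supp x \<times> {y}. (x (fst qq) * bas y (snd qq)) * mult_basis (fst qq) (snd qq) q)"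
    by (simp only:)
  also have "\<dots> = (\<Sum>u\<in>supp x. (x u * bas y y) * mult_basis u y q)"
    by (rule sum.reindex_bij_witness[of _ "\<lambda>u. (u, y)" fst]) auto
  also have "\<dots> = mult x (bas y) q"
    unfolding mult_def supp_bas by simp
  finally show ?thesis .
qed

lemma G_finite: "finite (supp x) \<Longrightarrow> finite (supp (\<lambda>qq. x (fst qq) * bas y (snd qq)))"
proof -
  assume "finite (supp x)"
  moreover have "supp (\<lambda>qq. x (fst qq) * bas y (snd qq)) \<subseteq> supp x \<times> {y}"
    by (auto simp: supp_def bas_def split: if_splits)
  ultimately show ?thesis by (meson finite_SigmaI finite.emptyI finite.insertI finite_subset)
qed

lemma antipode_rec:
  assumes s: "is_antipode s" and p: "p \<in> subst"
  shows "(\<lambda>q. \<Sum>i\<in>cI p. mult (s (fst (Phi p i))) (bas (snd (Phi p i))) q) = (\<lambda>q. counit (bas p) * unit q)"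
proof -
  have sfin: "\<And>u. u \<in> subst \<Longrightarrow> finite (supp (s u))"
    using s by (auto simp: is_antipode_def dWHA_def)
  have e: "mult_tens (tensor_map s bas (comult_basis p)) = (\<lambda>q. counit (bas p) * unit q)"
    using s p by (simp add: is_antipode_def comult_bas)
  have supp_ok: "pp \<in> supp (comult_basis p) \<Longrightarrow> fst pp \<in> subst" for pp
    using cb_supp[of p] Phi_subst[OF p] by blast
  have T: "tensor_map s bas (comult_basis p) = (\<lambda>qq. \<Sum>pp\<in>supp (comult_basis p).
        comult_basis p pp * (s (fst pp) (fst qq) * bas (snd pp) (snd qq)))"
    by (simp add: tensor_map_eq[abs_def])
  have "mult_tens (tensor_map s bas (comult_basis p)) q
     = (\<Sum>i\<in>cI p. mult (s (fst (Phi p i))) (bas (snd (Phi p i))) q)" for q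
  proof -
    have "mult_tens (tensor_map s bas (comult_basis p)) q
       = (\<Sum>pp\<in>supp (comult_basis p). comult_basis p pp *
           (\<Sum>qq\<in>supp (\<lambda>qq. s (fst pp) (fst qq) * bas (snd pp) (snd qq)).
               (s (fst pp) (fst qq) * bas (snd pp) (snd qq)) * mult_basis (fst qq) (snd qq) q))"
      unfolding mult_tens_def T
      by (rule sum_supp_lin) (auto simp: cb_finite intro!: G_finite sfin supp_ok)
    also have "\<dots> = (\<Sum>pp\<in>supp (comult_basis p). comult_basis p pp * mult (s (fst pp)) (bas (snd pp)) q)"
      by (intro sum.cong refl) (simp add: inner_G sfin supp_ok)
    also have "\<dots> = (\<Sum>i\<in>cI p. mult (s (fst (Phi p i))) (bas (snd (Phi p i))) q)"
      by (rule cb_sum)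
    finally show ?thesis .
  qed
  then show ?thesis using e by (simp add: fun_eq_iff)
qed

lemma shuf_Nil2[simp]: "shuf xs [] = [xs]"
  by (cases xs) auto

lemma mult_unit_right:
  assumes x: "x \<in> dWHA"
  shows "mult x (bas empty_sub) = x"
proof
  fix q
  have sx: "supp x \<subseteq> subst" and fx: "finite (supp x)" using x by (auto simp: dWHA_def)
  have "mult x (bas empty_sub) q = (\<Sum>u\<in>supp x. x u * mult_basis u empty_sub q)"
    unfolding mult_def supp_bas by simp
  also have "\<dots> = (\<Sum>u\<in>supp x. if u = q then x u else 0)"
  proof (rule sum.cong[OF refl])
    fix u assume "u \<in> supp x"
    then have "canon u = u" using sx by (auto simp: subst_def)
    then show "x u * mult_basis u empty_sub q = (if u = q then x u else 0)"
      by (simp add: mult_basis_def empty_sub_def Let_def)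
  qed
  also have "\<dots> = x q" using fx by (auto simp: supp_def)
  finally show "mult x (bas empty_sub) q = x q" .
qed

lemma std_bas: "std_surj (bas x) = bas (sb x)"
  by (simp add: std_eq fun_eq_iff)

lemma std_smult_unit: "std_surj (\<lambda>q. c * unit q) = (\<lambda>q. c * unit q)"
proof (cases "c = 0")
  case True then show ?thesis by (simp add: std_eq supp_def)
next
  case False
  then have "supp (\<lambda>q. c * unit q) = {empty_sub}" by (auto simp: supp_def unit_def bas_def)
  moreover have "sb empty_sub = empty_sub" by (simp add: std_surj_basis_def empty_sub_def canon_def)
  ultimately show ?thesis by (simp add: std_eq unit_def)
qed

lemma std_sum_fun:
  assumes "finite I" "\<And>i. i \<in> I \<Longrightarrow> finite (supp (g i))"
  shows "std_surj (\<lambda>q. \<Sum>i\<in>I. g i q) r = (\<Sum>i\<in>I. std_surj (g i) r)"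
  using sum_supp_lin[OF assms, where c = "\<lambda>_. 1" and H = "\<lambda>u. bas (sb u) r"] by (simp add: std_eq)



lemma Phi_last:
  assumes p: "p \<in> subst"
  shows "Phi p (length (snd p)) = (p, empty_sub)"
proof -
  have "filter (\<lambda>x. x \<in> set (snd p)) (fst p) = fst p" using p by (simp add: subst_def)
  then have "restr p (snd p) = canon p" by (simp add: restr_def)
  also have "\<dots> = p" using p by (simp add: subst_def)
  finally show ?thesis by (simp add: Phi_def restr_def canon_def empty_sub_def)
qed

lemma last_cI: "length (snd p) \<in> cI p"
  by (simp add: cI_def good_cut_def)

lemma counit_bas_sb: "p \<in> subst \<Longrightarrow> counit (bas (sb p)) = counit (bas p)"
  using sb_empty_iff[of p] by (auto simp: counit_def bas_def)

lemma std_antipode_basis: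
  assumes s: "is_antipode s"
  shows "p \<in> subst \<Longrightarrow> blk (fst p) \<Longrightarrow> std_surj (s p) = s (sb p)"
proof (induct "length (snd p)" arbitrary: p rule: less_induct)
  case less
  note p = less.prems(1) and b = less.prems(2)
  have sdw: "\<And>u. u \<in> subst \<Longrightarrow> s u \<in> dWHA" using s by (auto simp: is_antipode_def)
  have sfin: "\<And>u. u \<in> subst \<Longrightarrow> finite (supp (s u))" using sdw by (auto simp: dWHA_def)
  have bdw: "\<And>u. u \<in> subst \<Longrightarrow> bas u \<in> dWHA" by (simp add: dWHA_def)
  define n where "n = length (snd p)"
  define a where "a = (\<lambda>i. fst (Phi p i))"
  define c where "c = (\<lambda>i. snd (Phi p i))"
  have ac: "\<And>i. a i \<in> subst" "\<And>i. c i \<in> subst" using Phi_subst[OF p] by (auto simp: a_def c_def)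
  show ?case
  proof
    fix r
    have E1: "(\<Sum>i\<in>cI p. mult (std_surj (s (a i))) (bas (sb (c i))) r) = counit (bas p) * unit r"
    proof -
      have "std_surj (\<lambda>q. \<Sum>i\<in>cI p. mult (s (a i)) (bas (c i)) q) r = std_surj (\<lambda>q. counit (bas p) * unit q) r"
        using antipode_rec[OF s p] by (simp add: a_def c_def)
      moreover have "std_surj (\<lambda>q. \<Sum>i\<in>cI p. mult (s (a i)) (bas (c i)) q) r
          = (\<Sum>i\<in>cI p. std_surj (mult (s (a i)) (bas (c i))) r)"
        by (rule std_sum_fun) (simp_all add: cI_finite mult_finite sfin ac)
      moreover have "\<And>i. std_surj (mult (s (a i)) (bas (c i))) = mult (std_surj (s (a i))) (bas (sb (c i)))"
        using std_mult[OF sdw bdw] ac by (simp add: std_bas)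
      ultimately show ?thesis by (simp add: std_smult_unit)
    qed
    have E2: "(\<Sum>i\<in>cI p. mult (s (sb (a i))) (bas (sb (c i))) r) = counit (bas p) * unit r"
    proof -
      have "(\<lambda>q. \<Sum>i\<in>cI (sb p). mult (s (fst (Phi (sb p) i))) (bas (snd (Phi (sb p) i))) q)
          = (\<lambda>q. counit (bas (sb p)) * unit q)"
        by (rule antipode_rec[OF s sb_subst[OF p]])
      from fun_cong[OF this, of r] show ?thesis using Phi_sb[OF p b] cI_sb[OF p] counit_bas_sb[OF p]
        by (simp add: a_def c_def)
    qed
    define D where "D = (\<lambda>i. mult (std_surj (s (a i))) (bas (sb (c i))) r - mult (s (sb (a i))) (bas (sb (c i))) r)"
    have "(\<Sum>i\<in>cI p. D i) = 0"
      using E1 E2 by (simp add: D_def sum_subtractf)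
    moreover have "(\<Sum>i\<in>cI p. D i) = D n + (\<Sum>i\<in>cI p - {n}. D i)"
      using cI_finite last_cI by (simp add: n_def sum.remove)
    moreover have "(\<Sum>i\<in>cI p - {n}. D i) = 0"
    proof (rule sum.neutral, rule ballI)
      fix i assume i: "i \<in> cI p - {n}"
      then have "i < n" by (auto simp: cI_def good_cut_def n_def)
      have la: "length (snd (a i)) = i"
        by (simp add: a_def Phi_def restr_len) (use \<open>i < n\<close> n_def in simp)
      have "blk (fst (a i))" using b by (simp add: a_def Phi_def restr_blk)
      then have "std_surj (s (a i)) = s (sb (a i))"
        using less.hyps[of "a i"] la \<open>i < n\<close> ac n_def by simp
      then show "D i = 0" by (simp add: D_def)
    qed
    ultimately have "D n = 0" by simp
    moreover have "a n = p" "c n = empty_sub" using Phi_last[OF p] by (simp_all add: a_def c_def n_def)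
    moreover have "sb empty_sub = empty_sub" by (simp add: std_surj_basis_def empty_sub_def canon_def)
    ultimately have "mult (std_surj (s p)) (bas empty_sub) r = mult (s (sb p)) (bas empty_sub) r"
      by (simp add: D_def)
    then show "std_surj (s p) r = s (sb p) r"
      using mult_unit_right[OF std_dWHA[OF sdw[OF p]]] mult_unit_right[OF sdw[OF sb_subst[OF p]]]
      by simp
  qed
qed

lemma std_antipode:
  assumes s: "is_antipode s" and a: "a \<in> WHA"
  shows "std_surj (lin s a) = lin s (std_surj a)"
proof
  fix r
  have fa: "finite (supp a)" and sa: "\<And>p. p \<in> supp a \<Longrightarrow> p \<in> subst \<and> blk (fst p)"
    using a by (auto simp: WHA_def span_def dWHA_def WHA_basis_blk)
  have sfin: "\<And>u. u \<in> subst \<Longrightarrow> finite (supp (s u))" using s by (auto simp: is_antipode_def dWHA_def)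
  have "std_surj (lin s a) r = (\<Sum>p\<in>supp a. a p * (\<Sum>u\<in>supp (s p). s p u * bas (sb u) r))"
    unfolding std_eq lin_def
    by (rule sum_supp_lin) (simp_all add: fa sfin sa)
  also have "\<dots> = (\<Sum>p\<in>supp a. a p * s (sb p) r)"
  proof (rule sum.cong[OF refl])
    fix p assume "p \<in> supp a"
    then have "std_surj (s p) = s (sb p)" using std_antipode_basis[OF s] sa by blast
    then have "std_surj (s p) r = s (sb p) r" by simp
    then show "a p * (\<Sum>u\<in>supp (s p). s p u * bas (sb u) r) = a p * s (sb p) r"
      by (simp add: std_eq)
  qed
  also have "\<dots> = lin s (std_surj a) r"
    unfolding lin_def using std_sum[OF fa, of "\<lambda>u. s u r"] by simp
  finally show "std_surj (lin s a) r = lin s (std_surj a) r" .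
qed



lemma WHA_dWHA: "a \<in> WHA \<Longrightarrow> a \<in> dWHA"
  by (simp add: WHA_def span_def)

lemma std_id_surj:
  assumes a: "a \<in> WHA_surj"
  shows "std_surj a = a"
proof
  fix q
  have fa: "finite (supp a)" and sa: "\<And>p. p \<in> supp a \<Longrightarrow> p \<in> subst \<and> distinct (fst p)"
    using a by (auto simp: WHA_surj_def span_def dWHA_def WHA_basis_blk)
  have "std_surj a q = (\<Sum>p\<in>supp a. a p * bas p q)"
    unfolding std_eq using sa by (intro sum.cong refl) (simp add: sb_id)
  also have "\<dots> = (\<Sum>p\<in>supp a. if p = q then a p else 0)"
    by (intro sum.cong refl) (auto simp: bas_def)
  also have "\<dots> = a q" using fa by (auto simp: supp_def)
  finally show "std_surj a q = a q" .
qed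

lemma inj_surj_MPR: "WHA_inj \<inter> WHA_surj = phi_MPR"
proof -
  have "{p \<in> WHA_basis. distinct (snd p)} \<inter> {p \<in> WHA_basis. distinct (fst p)}
      = {p \<in> subst. distinct (fst p) \<and> distinct (snd p)}"
    by (auto simp: WHA_basis_blk distinct_blk)
  then show ?thesis unfolding WHA_inj_def WHA_surj_def phi_MPR_def span_def by blast
qed

lemma std_WHA_surj: "a \<in> WHA \<Longrightarrow> std_surj a \<in> WHA_surj"
proof -
  assume a: "a \<in> WHA"
  have "sb ` supp a \<subseteq> {p \<in> WHA_basis. distinct (fst p)}"
    using a sb_WHA by (auto simp: WHA_def span_def WHA_basis_blk)
  then show ?thesis using std_supp[of a] std_dWHA[OF WHA_dWHA[OF a]]
    unfolding WHA_surj_def span_def by blast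
qed

lemma std_inj: "std_surj ` WHA_inj = WHA_inj \<inter> WHA_surj"
proof
  show "std_surj ` WHA_inj \<subseteq> WHA_inj \<inter> WHA_surj"
  proof
    fix b assume "b \<in> std_surj ` WHA_inj"
    then obtain a where a: "a \<in> WHA_inj" and b: "b = std_surj a" by blast
    have sa: "supp a \<subseteq> {p \<in> WHA_basis. distinct (snd p)}" and da: "a \<in> dWHA"
      using a by (auto simp: WHA_inj_def span_def)
    have "sb ` supp a \<subseteq> {p \<in> WHA_basis. distinct (snd p)} \<inter> {p \<in> WHA_basis. distinct (fst p)}"
    proof
      fix u assume "u \<in> sb ` supp a"
      then obtain p where p: "p \<in> supp a" "u = sb p" by blast
      then have "p \<in> subst" "blk (fst p)" "distinct (snd p)" using sa by (auto simp: WHA_basis_blk)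
      then show "u \<in> {p \<in> WHA_basis. distinct (snd p)} \<inter> {p \<in> WHA_basis. distinct (fst p)}"
        using p sb_WHA sb_distinct_snd by auto
    qed
    then show "b \<in> WHA_inj \<inter> WHA_surj" using std_supp[of a] std_dWHA[OF da] b
      unfolding WHA_inj_def WHA_surj_def span_def by blast
  qed
next
  show "WHA_inj \<inter> WHA_surj \<subseteq> std_surj ` WHA_inj"
  proof
    fix b assume b: "b \<in> WHA_inj \<inter> WHA_surj"
    then have "std_surj b = b" using std_id_surj by blast
    then show "b \<in> std_surj ` WHA_inj" using b by (metis IntD1 image_eqI)
  qed
qed

theorem proposition10p3:
  shows "std_surj ` WHA \<subseteq> WHA_surj
    \<and> (\<forall>a\<in>WHA. \<forall>b\<in>WHA. std_surj (mult a b) = mult (std_surj a) (std_surj b))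
    \<and> std_surj unit = unit
    \<and> (\<forall>a\<in>WHA. comult (std_surj a)
          = tensor_map (\<lambda>p. bas (std_surj_basis p)) (\<lambda>p. bas (std_surj_basis p)) (comult a))
    \<and> (\<forall>a\<in>WHA. counit (std_surj a) = counit a)
    \<and> (\<forall>s. is_antipode s \<longrightarrow> (\<forall>a\<in>WHA. std_surj (lin s a) = lin s (std_surj a)))
    \<and> (\<forall>a\<in>WHA_surj. std_surj a = a)
    \<and> WHA_inj \<inter> WHA_surj = phi_MPR
    \<and> std_surj ` WHA_inj = WHA_inj \<inter> WHA_surj
    \<and> std_surj ` WHA_inj \<subseteq> phi_MPR
    \<and> (\<forall>a\<in>phi_MPR. std_surj a = a)"
proof (intro conjI ballI allI impI)
  show "std_surj ` WHA \<subseteq> WHA_surj" using std_WHA_surj by blast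
  show "std_surj (mult a b) = mult (std_surj a) (std_surj b)" if "a \<in> WHA" "b \<in> WHA" for a b
    using that by (simp add: std_mult WHA_dWHA)
  show "std_surj unit = unit"
    by (simp add: unit_def std_bas std_surj_basis_def empty_sub_def canon_def)
  show "comult (std_surj a) = tensor_map (\<lambda>p. bas (std_surj_basis p)) (\<lambda>p. bas (std_surj_basis p)) (comult a)"
    if "a \<in> WHA" for a using that by (rule std_comult)
  show "counit (std_surj a) = counit a" if "a \<in> WHA" for a
    using that by (simp add: std_counit WHA_dWHA)
  show "std_surj (lin s a) = lin s (std_surj a)" if "is_antipode s" "a \<in> WHA" for s a
    using that by (rule std_antipode)
  show "std_surj a = a" if "a \<in> WHA_surj" for a using that by (rule std_id_surj)
  show "WHA_inj \<inter> WHA_surj = phi_MPR" by (rule inj_surj_MPR)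
  show "std_surj ` WHA_inj = WHA_inj \<inter> WHA_surj" by (rule std_inj)
  show "std_surj ` WHA_inj \<subseteq> phi_MPR" using std_inj inj_surj_MPR by simp
  show "std_surj a = a" if "a \<in> phi_MPR" for a
    using that inj_surj_MPR std_id_surj by blast
qed

end
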